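(* Let $1\le s\le d/2$ and $n\ge d+1$, and let $\mathcal F\subseteq\binom{[n]}{d+1}$ be an $s$-witness family, where for each $F\in\mathcal F$ a witness $B_F\subseteq F$ with $|B_F|=s$ (so that $F\cap F'\ne B_F$ for all $F'\in\mathcal F$) has been fixed. Let $\mathcal B=\{B\in\binom{[n]}{s}: \exists F\in\mathcal F \text{ with } B_F=B\}$. Then there is a constant $C_d$ depending only on $d$ such that for every $B\in\mathcal B$ there exists a family $\mathcal A_B$ of subsets of $[n]\setminus B$, each of size at most $d+1-s$, satisfying: (1) $\mathcal A_B$ is intersecting, i.e. $A\cap A'\neq\varnothing$ for all $A,A'\in\mathcal A_B$; (2) for every $F\in\mathcal F$ with $B_F=B$, there exists $A\in\mathcal A_B$ with $A\subseteq F$; (3) for every $F\in\mathcal F$ with $B\subseteq F$ (possibly $B_F\ne B$), we have $A\cap F\neq\varnothing$ for all $A\in\mathcal A_B$; (4) $|\mathcal A_B|\le C_d$.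
   Context: $[n]=\{1,\dots,n\}$ and $\binom{[n]}{k}$ denotes the family of all $k$-element subsets of $[n]$. For $n\ge d+1$ and $0\le s\le d$, a family $\mathcal F\subseteq\binom{[n]}{d+1}$ is an $s$-witness family if for every $F\in\mathcal F$ there exists $B_F\subseteq F$ with $|B_F|=s$ such that $F\cap F'\neq B_F$ for every $F'\in\mathcal F$; such $B_F$ is called a witness of $F$. *)

theory Defs
  imports Main
begin

definition is_witness :: "nat set set \<Rightarrow> nat \<Rightarrow> nat set \<Rightarrow> nat set \<Rightarrow> bool" where
  "is_witness \<F> s F B \<longleftrightarrow> B \<subseteq> F \<and> card B = s \<and> (\<forall>F'\<in>\<F>. F \<inter> F' \<noteq> B)"

definition uniform_family :: "nat \<Rightarrow> nat \<Rightarrow> nat set set \<Rightarrow> bool" where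
  "uniform_family n d \<F> \<longleftrightarrow> (\<forall>F\<in>\<F>. F \<subseteq> {1..n} \<and> card F = d + 1)"

end

theory Submission
  imports Defs
begin

definition transv :: "nat set set \<Rightarrow> nat set \<Rightarrow> bool" where
  "transv E A \<longleftrightarrow> (\<forall>X\<in>E. A \<inter> X \<noteq> {})"

definition mt :: "nat set \<Rightarrow> nat set set \<Rightarrow> nat set \<Rightarrow> nat \<Rightarrow> nat set set" where
  "mt U E S t = {A. A \<subseteq> U \<and> S \<subseteq> A \<and> card (A - S) \<le> t \<and> transv E A \<and>
      (\<forall>A0. A0 \<subset> A \<longrightarrow> \<not> transv E A0)}"

lemma mt_finite: "finite U \<Longrightarrow> finite (mt U E S t)"
  by (rule finite_subset[of _ "Pow U"]) (auto simp: mt_def)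

lemma mt_bound:
  assumes U: "finite U" and E: "\<forall>X\<in>E. finite X \<and> card X \<le> r"
  shows "card (mt U E S t) \<le> (r+1)^t"
proof (induction t arbitrary: S)
  case 0
  show ?case
  proof (cases "transv E S")
    case True
    have "mt U E S 0 \<subseteq> {S}"
      using True by (auto simp: mt_def)
    then have "card (mt U E S 0) \<le> card {S}" by (rule card_mono[rotated]) simp
    then show ?thesis by simp
  next
    case False
    have "mt U E S 0 = {}"
    proof (rule ccontr)
      assume "mt U E S 0 \<noteq> {}"
      then obtain A where A: "A \<in> mt U E S 0" by blast
      then have "finite A" using U by (auto simp: mt_def intro: finite_subset)
      then have "A = S" using A by (auto simp: mt_def)
      then show False using A False by (auto simp: mt_def)
    qed
    then show ?thesis by simp
  qed
next
  case (Suc t)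
  show ?case
  proof (cases "transv E S")
    case True
    have "mt U E S (Suc t) \<subseteq> {S}"
      using True by (auto simp: mt_def)
    then have "card (mt U E S (Suc t)) \<le> card {S}" by (rule card_mono[rotated]) simp
    then have "card (mt U E S (Suc t)) \<le> 1" by simp
    also have "1 \<le> (r+1) ^ Suc t" using one_le_power[of "r+1" "Suc t"] by simp
    finally show ?thesis .
  next
    case False
    then obtain X where X: "X \<in> E" "S \<inter> X = {}" by (auto simp: transv_def)
    have sub: "mt U E S (Suc t) \<subseteq> (\<Union>x\<in>X. mt U E (insert x S) t)"
    proof
      fix A assume A: "A \<in> mt U E S (Suc t)"
      then have "A \<inter> X \<noteq> {}" using X by (auto simp: mt_def transv_def)
      then obtain x where x: "x \<in> A" "x \<in> X" by blast
      have "x \<notin> S" using x X by blast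
      have fA: "finite A" using A U by (auto simp: mt_def intro: finite_subset)
      have "A - insert x S = (A - S) - {x}" by blast
      then have "card (A - insert x S) = card (A - S) - 1"
        using x \<open>x \<notin> S\<close> fA by simp
      then have "card (A - insert x S) \<le> t" using A unfolding mt_def by auto
      then have "A \<in> mt U E (insert x S) t" using A x by (auto simp: mt_def)
      then show "A \<in> (\<Union>x\<in>X. mt U E (insert x S) t)" using x by blast
    qed
    have fX: "finite X" "card X \<le> r" using E X by auto
    have "card (mt U E S (Suc t)) \<le> card (\<Union>x\<in>X. mt U E (insert x S) t)"
      by (rule card_mono[OF _ sub]) (use fX mt_finite[OF U] in auto)
    also have "\<dots> \<le> (\<Sum>x\<in>X. card (mt U E (insert x S) t))"
      by (rule card_UN_le[OF fX(1)])
    also have "\<dots> \<le> (\<Sum>x\<in>X. (r+1)^t)"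
      by (rule sum_mono) (rule Suc.IH)
    also have "\<dots> = card X * (r+1)^t" by simp
    also have "\<dots> \<le> r * (r+1)^t" using fX by (intro mult_right_mono) auto
    also have "\<dots> \<le> (r+1) * (r+1)^t" by (intro mult_right_mono) auto
    finally show ?thesis by simp
  qed
qed

theorem lemma2p2:
  fixes d :: nat
  shows "\<exists>C :: nat. \<forall>(n::nat) (s::nat) (\<F>::nat set set) (BF :: nat set \<Rightarrow> nat set).
    1 \<le> s \<and> 2 * s \<le> d \<and> d + 1 \<le> n \<and> uniform_family n d \<F> \<and>
    (\<forall>F\<in>\<F>. is_witness \<F> s F (BF F)) \<longrightarrow>
    (\<forall>B \<in> {B. B \<subseteq> {1..n} \<and> card B = s \<and> (\<exists>F\<in>\<F>. BF F = B)}.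
      \<exists>\<A> :: nat set set.
        (\<forall>A\<in>\<A>. A \<subseteq> {1..n} - B \<and> card A \<le> d + 1 - s) \<and>
        (\<forall>A\<in>\<A>. \<forall>A'\<in>\<A>. A \<inter> A' \<noteq> {}) \<and>
        (\<forall>F\<in>\<F>. BF F = B \<longrightarrow> (\<exists>A\<in>\<A>. A \<subseteq> F)) \<and>
        (\<forall>F\<in>\<F>. B \<subseteq> F \<longrightarrow> (\<forall>A\<in>\<A>. A \<inter> F \<noteq> {})) \<and>
        card \<A> \<le> C)"
proof (rule exI[of _ "(d+2)^(d+1)"], intro allI impI ballI)
  fix n s :: nat and \<F> :: "nat set set" and BF :: "nat set \<Rightarrow> nat set" and B
  assume H: "1 \<le> s \<and> 2 * s \<le> d \<and> d + 1 \<le> n \<and> uniform_family n d \<F> \<and>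
    (\<forall>F\<in>\<F>. is_witness \<F> s F (BF F))"
    and HB: "B \<in> {B. B \<subseteq> {1..n} \<and> card B = s \<and> (\<exists>F\<in>\<F>. BF F = B)}"
  have uf: "\<And>F. F \<in> \<F> \<Longrightarrow> F \<subseteq> {1..n} \<and> card F = d + 1"
    using H by (auto simp: uniform_family_def)
  have wit: "\<And>F. F \<in> \<F> \<Longrightarrow> BF F \<subseteq> F \<and> card (BF F) = s \<and> (\<forall>F'\<in>\<F>. F \<inter> F' \<noteq> BF F)"
    using H by (auto simp: is_witness_def)
  have cB: "card B = s" "B \<subseteq> {1..n}" using HB by auto
  define k where "k = d + 1 - s"
  have cardFB: "card (F - B) = k" if "F \<in> \<F>" "B \<subseteq> F" for F
  proof -
    have "finite F" using uf[OF that(1)] by (auto intro: finite_subset)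
    then show ?thesis using that uf[OF that(1)] cB by (simp add: card_Diff_subset k_def finite_subset)
  qed
  define K where "K = {F - B | F. F \<in> \<F> \<and> B \<subseteq> F}"
  define valid where "valid \<A> \<longleftrightarrow> finite \<A> \<and> (\<forall>A\<in>\<A>. A \<subseteq> {1..n} - B \<and> card A \<le> k) \<and>
     (\<forall>A\<in>\<A>. \<forall>A'\<in>\<A>. A \<inter> A' \<noteq> {}) \<and>
     (\<forall>F\<in>\<F>. BF F = B \<longrightarrow> (\<exists>A\<in>\<A>. A \<subseteq> F)) \<and>
     (\<forall>F\<in>\<F>. B \<subseteq> F \<longrightarrow> (\<forall>A\<in>\<A>. A \<inter> F \<noteq> {}))" for \<A>
  define H0 where "H0 = {F - B | F. F \<in> \<F> \<and> BF F = B}"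
  have key: "\<exists>x\<in>F \<inter> F'. x \<notin> B" if "F \<in> \<F>" "F' \<in> \<F>" "BF F = B" "B \<subseteq> F'" for F F'
  proof -
    have "F \<inter> F' \<noteq> B" using wit[OF that(1)] that by auto
    moreover have "B \<subseteq> F \<inter> F'" using wit[OF that(1)] that by auto
    ultimately show ?thesis by blast
  qed
  have "valid H0"
    unfolding valid_def
  proof (intro conjI)
    show "finite H0"
      by (rule finite_subset[of _ "Pow {1..n}"]) (use uf in \<open>auto simp: H0_def\<close>)
    show "\<forall>A\<in>H0. A \<subseteq> {1..n} - B \<and> card A \<le> k"
      using uf cardFB wit by (fastforce simp: H0_def)
    show "\<forall>A\<in>H0. \<forall>A'\<in>H0. A \<inter> A' \<noteq> {}"
    proof (intro ballI)
      fix A A' assume "A \<in> H0" "A' \<in> H0"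
      then obtain F F' where "A = F - B" "A' = F' - B" "F \<in> \<F>" "F' \<in> \<F>" "BF F = B" "BF F' = B"
        by (auto simp: H0_def)
      then show "A \<inter> A' \<noteq> {}" using key[of F F'] wit by blast
    qed
    show "\<forall>F\<in>\<F>. BF F = B \<longrightarrow> (\<exists>A\<in>H0. A \<subseteq> F)"
      by (auto simp: H0_def)
    show "\<forall>F\<in>\<F>. B \<subseteq> F \<longrightarrow> (\<forall>A\<in>H0. A \<inter> F \<noteq> {})"
    proof (intro ballI impI)
      fix F' A assume "F' \<in> \<F>" "B \<subseteq> F'" "A \<in> H0"
      then obtain F where "A = F - B" "F \<in> \<F>" "BF F = B" by (auto simp: H0_def)
      then show "A \<inter> F' \<noteq> {}" using key[of F F'] \<open>F' \<in> \<F>\<close> \<open>B \<subseteq> F'\<close> by blast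
    qed
  qed
  then obtain \<A> where v: "valid \<A>"
    and mn: "\<And>\<A>'. valid \<A>' \<Longrightarrow> (\<Sum>A\<in>\<A>. card A) \<le> (\<Sum>A\<in>\<A>'. card A)"
    using ex_has_least_nat[of valid H0 "\<lambda>\<A>. \<Sum>A\<in>\<A>. card A"] by blast
  have vf: "finite \<A>" and vs: "\<And>A. A \<in> \<A> \<Longrightarrow> A \<subseteq> {1..n} - B \<and> card A \<le> k"
    and v1: "\<And>A A'. A \<in> \<A> \<Longrightarrow> A' \<in> \<A> \<Longrightarrow> A \<inter> A' \<noteq> {}"
    and v2: "\<And>F. F \<in> \<F> \<Longrightarrow> BF F = B \<Longrightarrow> \<exists>A\<in>\<A>. A \<subseteq> F"
    and v3: "\<And>F A. F \<in> \<F> \<Longrightarrow> B \<subseteq> F \<Longrightarrow> A \<in> \<A> \<Longrightarrow> A \<inter> F \<noteq> {}"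
    using v unfolding valid_def by blast+
  let ?E = "K \<union> \<A>"
  have sub: "\<A> \<subseteq> mt {1..n} ?E {} k"
  proof
    fix A assume A: "A \<in> \<A>"
    have tA: "transv ?E A"
      unfolding transv_def
    proof
      fix X assume "X \<in> ?E"
      then show "A \<inter> X \<noteq> {}"
      proof
        assume "X \<in> K"
        then obtain F where "X = F - B" "F \<in> \<F>" "B \<subseteq> F" by (auto simp: K_def)
        then show ?thesis using v3[of F A] A vs[OF A] by blast
      next
        assume "X \<in> \<A>" then show ?thesis using v1 A by blast
      qed
    qed
    have minA: "\<not> transv ?E A0" if A0: "A0 \<subset> A" for A0
    proof
      assume t0: "transv ?E A0"
      define \<A>' where "\<A>' = insert A0 (\<A> - {A})"
      have fA: "finite A" using vs[OF A] by (auto intro: finite_subset)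
      have lt: "card A0 < card A" using psubset_card_mono[OF fA A0] .
      have ne: "A0 \<inter> A' \<noteq> {}" if "A' \<in> \<A>" for A'
        using t0 that by (auto simp: transv_def)
      have "valid \<A>'"
        unfolding valid_def
      proof (intro conjI)
        show "finite \<A>'" using vf by (simp add: \<A>'_def)
        show "\<forall>A\<in>\<A>'. A \<subseteq> {1..n} - B \<and> card A \<le> k"
          using vs A A0 lt by (fastforce simp: \<A>'_def)
        show "\<forall>A\<in>\<A>'. \<forall>A'\<in>\<A>'. A \<inter> A' \<noteq> {}"
        proof (intro ballI)
          fix X Y assume X: "X \<in> \<A>'" and Y: "Y \<in> \<A>'"
          have a0: "A0 \<inter> A0 \<noteq> {}" using ne[OF A] by blast
          show "X \<inter> Y \<noteq> {}"
          proof (cases "X = A0")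
            case True
            then show ?thesis
            proof (cases "Y = A0")
              case True then show ?thesis using a0 \<open>X = A0\<close> by simp
            next
              case False then have "Y \<in> \<A>" using Y by (auto simp: \<A>'_def)
              then show ?thesis using ne \<open>X = A0\<close> by simp
            qed
          next
            case False then have XA: "X \<in> \<A>" using X by (auto simp: \<A>'_def)
            show ?thesis
            proof (cases "Y = A0")
              case True then show ?thesis using ne[OF XA] by (simp add: Int_commute)
            next
              case False then have "Y \<in> \<A>" using Y by (auto simp: \<A>'_def)
              then show ?thesis using v1 XA by simp
            qed
          qed
        qed
        show "\<forall>F\<in>\<F>. BF F = B \<longrightarrow> (\<exists>A\<in>\<A>'. A \<subseteq> F)"
        proof (intro ballI impI)
          fix F assume "F \<in> \<F>" "BF F = B"
          then obtain A1 where "A1 \<in> \<A>" "A1 \<subseteq> F" using v2 by blast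
          then show "\<exists>A\<in>\<A>'. A \<subseteq> F"
            using A0 by (cases "A1 = A") (auto simp: \<A>'_def)
        qed
        show "\<forall>F\<in>\<F>. B \<subseteq> F \<longrightarrow> (\<forall>A\<in>\<A>'. A \<inter> F \<noteq> {})"
        proof (intro ballI impI)
          fix F A1 assume "F \<in> \<F>" "B \<subseteq> F" "A1 \<in> \<A>'"
          moreover have "F - B \<in> K" using \<open>F \<in> \<F>\<close> \<open>B \<subseteq> F\<close> by (auto simp: K_def)
          ultimately show "A1 \<inter> F \<noteq> {}"
          proof (cases "A1 = A0")
            case True
            then have "A1 \<inter> (F - B) \<noteq> {}" using t0 \<open>F - B \<in> K\<close> by (auto simp: transv_def)
            then show ?thesis by blast
          next
            case False then have "A1 \<in> \<A>" using \<open>A1 \<in> \<A>'\<close> by (auto simp: \<A>'_def)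
            then show ?thesis using v3 \<open>F \<in> \<F>\<close> \<open>B \<subseteq> F\<close> by blast
          qed
        qed
      qed
      then have "(\<Sum>A\<in>\<A>. card A) \<le> (\<Sum>A\<in>\<A>'. card A)" by (rule mn)
      also have "(\<Sum>A\<in>\<A>'. card A) \<le> card A0 + (\<Sum>A\<in>\<A> - {A}. card A)"
        unfolding \<A>'_def using vf by (simp add: sum.insert_if)
      also have "\<dots> < card A + (\<Sum>A\<in>\<A> - {A}. card A)" using lt by simp
      also have "\<dots> = (\<Sum>A\<in>\<A>. card A)" using vf A by (simp add: sum.remove)
      finally show False by simp
    qed
    show "A \<in> mt {1..n} ?E {} k"
      unfolding mt_def using vs[OF A] tA minA by auto
  qed
  have Ebd: "\<forall>X\<in>?E. finite X \<and> card X \<le> k"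
  proof
    fix X assume "X \<in> ?E"
    then show "finite X \<and> card X \<le> k"
    proof
      assume "X \<in> K"
      then obtain F where "X = F - B" "F \<in> \<F>" "B \<subseteq> F" by (auto simp: K_def)
      moreover have "finite F" using uf[OF \<open>F \<in> \<F>\<close>] by (auto intro: finite_subset)
      ultimately show ?thesis using cardFB by auto
    next
      assume "X \<in> \<A>" then show ?thesis using vs by (auto intro: finite_subset)
    qed
  qed
  have "card \<A> \<le> card (mt {1..n} ?E {} k)"
    by (rule card_mono[OF mt_finite sub]) simp
  also have "\<dots> \<le> (k+1)^k" by (rule mt_bound[OF _ Ebd]) simp
  also have "\<dots> \<le> (d+2)^k" by (rule power_mono) (auto simp: k_def)
  also have "\<dots> \<le> (d+2)^(d+1)" by (rule power_increasing) (auto simp: k_def)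
  finally have cA: "card \<A> \<le> (d+2)^(d+1)" .
  show "\<exists>\<A> :: nat set set.
        (\<forall>A\<in>\<A>. A \<subseteq> {1..n} - B \<and> card A \<le> d + 1 - s) \<and>
        (\<forall>A\<in>\<A>. \<forall>A'\<in>\<A>. A \<inter> A' \<noteq> {}) \<and>
        (\<forall>F\<in>\<F>. BF F = B \<longrightarrow> (\<exists>A\<in>\<A>. A \<subseteq> F)) \<and>
        (\<forall>F\<in>\<F>. B \<subseteq> F \<longrightarrow> (\<forall>A\<in>\<A>. A \<inter> F \<noteq> {})) \<and>
        card \<A> \<le> (d+2)^(d+1)"
  proof (rule exI[of _ \<A>], intro conjI)
    show "\<forall>A\<in>\<A>. A \<subseteq> {1..n} - B \<and> card A \<le> d + 1 - s" using vs by (simp add: k_def)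
    show "\<forall>A\<in>\<A>. \<forall>A'\<in>\<A>. A \<inter> A' \<noteq> {}" using v1 by blast
    show "\<forall>F\<in>\<F>. BF F = B \<longrightarrow> (\<exists>A\<in>\<A>. A \<subseteq> F)" using v2 by blast
    show "\<forall>F\<in>\<F>. B \<subseteq> F \<longrightarrow> (\<forall>A\<in>\<A>. A \<inter> F \<noteq> {})" using v3 by blast
    show "card \<A> \<le> (d+2)^(d+1)" by (rule cA)
  qed
qed

end
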